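(* Let $\mathcal X_1=(\Omega_1,S_1)$, $\mathcal X_2=(\Omega_2,S_2)$ be coherent configurations, $\mathcal X=\mathcal X_1\wr\mathcal X_2$ on $\Omega=\Omega_1\times\Omega_2$, and $\Pi\subseteq 2^\Omega$. Suppose that (1) for every $a\in\Omega_2$ the family $\Pi_a=\{\Gamma\cap\Omega_a:\Gamma\in\Pi\}$ is a generalized base of $\mathcal X_{\Omega_a}$, and (2) the family $\{\pi(\Gamma):\Gamma\in\Pi\}$ is a generalized base of $\mathcal X_2$, where $\pi:\Omega\to\Omega_2$ is the projection. Then $\Pi$ is a generalized base of $\mathcal X$.
   Context: A coherent configuration on a finite set $\Omega$ is $\mathcal X=(\Omega,S)$ with $S$ a partition of $\Omega\times\Omega$ such that $1_\Omega$ is a union of elements of $S$, $s^*=\{(\beta,\alpha):(\alpha,\beta)\in s\}\in S$ for $s\in S$, and for $r,s,t\in S$ the number $|\{\gamma:(\alpha,\gamma)\in r,(\gamma,\beta)\in s\}|$ is independent of $(\alpha,\beta)\in t$. Relations are unions of elements of $S$; fibers are sets $\Gamma$ with $1_\Gamma\in S$. $\mathcal X\le\mathcal X'$ if every relation of $\mathcal X$ is a relation of $\mathcal X'$ (fission). Complete: all basic relations singletons. For $\Pi\subseteq2^\Omega$, the $\Pi$-fission is the smallest fission in which each member of $\Pi$ is a union of fibers; $\Pi$ is a generalized base if its $\Pi$-fission is complete. For an equivalence relation $e$ that is a relation of $\mathcal X$ and a class $\Delta$ of $e$, the restriction is $\mathcal X_\Delta=(\Delta,\{s\cap\Delta^2:s\in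 S\}\setminus\{\emptyset\})$, and the quotient $\mathcal X_{\Omega/e}$ is the coherent configuration on $\Omega/e$ with basic relations $\{(\Gamma,\Delta): s\cap(\Gamma\times\Delta)\ne\emptyset\}$, $s\in S$ (nonempty ones). The wreath product $\mathcal X_1\wr\mathcal X_2$ is the smallest coherent configuration $\mathcal X$ on $\Omega_1\times\Omega_2$ such that the equivalence relation $e$ with classes $\Omega_a=\Omega_1\times\{a\}$, $a\in\Omega_2$, is a relation of $\mathcal X$, each restriction $\mathcal X_{\Omega_a}$ is the image of $\mathcal X_1$ under $x\mapsto(x,a)$, and $\mathcal X_{\Omega/e}$ is the image of $\mathcal X_2$ under $a\mapsto\Omega_a$. *)

theory Defs
  imports Main
begin

definition coherent_config :: "'a set \<Rightarrow> ('a \<times> 'a) set set \<Rightarrow> bool" where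
"coherent_config \<Omega> S \<longleftrightarrow>
   finite \<Omega> \<and> (\<forall>s\<in>S. s \<noteq> {}) \<and> \<Union>S = \<Omega> \<times> \<Omega> \<and>
   (\<forall>s\<in>S. \<forall>t\<in>S. s \<noteq> t \<longrightarrow> s \<inter> t = {}) \<and>
   (\<exists>T\<subseteq>S. \<Union>T = Id_on \<Omega>) \<and>
   (\<forall>s\<in>S. converse s \<in> S) \<and>
   (\<forall>r\<in>S. \<forall>s\<in>S. \<forall>t\<in>S. \<forall>p\<in>t. \<forall>q\<in>t.
      card {\<gamma>. (fst p, \<gamma>) \<in> r \<and> (\<gamma>, snd p) \<in> s} =
      card {\<gamma>. (fst q, \<gamma>) \<in> r \<and> (\<gamma>, snd q) \<in> s})"

definition cc_rels :: "('a \<times> 'a) set set \<Rightarrow> ('a \<times> 'a) set set" where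
"cc_rels S = {\<Union>T | T. T \<subseteq> S}"

text \<open>S' is a fission of S (same point set understood).\<close>
definition fission :: "('a \<times> 'a) set set \<Rightarrow> ('a \<times> 'a) set set \<Rightarrow> bool" where
"fission S S' \<longleftrightarrow> cc_rels S \<subseteq> cc_rels S'"

definition fibers :: "('a \<times> 'a) set set \<Rightarrow> 'a set set" where
"fibers S = {\<Gamma>. Id_on \<Gamma> \<in> S}"

definition union_of_fibers :: "('a \<times> 'a) set set \<Rightarrow> 'a set \<Rightarrow> bool" where
"union_of_fibers S \<Delta> \<longleftrightarrow> (\<exists>F\<subseteq>fibers S. \<Delta> = \<Union>F)"

definition complete_cc :: "('a \<times> 'a) set set \<Rightarrow> bool" where
"complete_cc S \<longleftrightarrow> (\<forall>s\<in>S. \<exists>p. s = {p})"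

definition is_Pi_fission ::
  "'a set \<Rightarrow> ('a \<times> 'a) set set \<Rightarrow> 'a set set \<Rightarrow> ('a \<times> 'a) set set \<Rightarrow> bool" where
"is_Pi_fission \<Omega> S \<Pi> S' \<longleftrightarrow>
   coherent_config \<Omega> S' \<and> fission S S' \<and> (\<forall>\<Delta>\<in>\<Pi>. union_of_fibers S' \<Delta>) \<and>
   (\<forall>S''. coherent_config \<Omega> S'' \<and> fission S S'' \<and> (\<forall>\<Delta>\<in>\<Pi>. union_of_fibers S'' \<Delta>)
          \<longrightarrow> fission S' S'')"

definition gen_base :: "'a set \<Rightarrow> ('a \<times> 'a) set set \<Rightarrow> 'a set set \<Rightarrow> bool" where
"gen_base \<Omega> S \<Pi> \<longleftrightarrow> (\<exists>S'. is_Pi_fission \<Omega> S \<Pi> S' \<and> complete_cc S')"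

definition restr :: "('a \<times> 'a) set set \<Rightarrow> 'a set \<Rightarrow> ('a \<times> 'a) set set" where
"restr S \<Delta> = {s \<inter> (\<Delta> \<times> \<Delta>) | s. s \<in> S} - {{}}"

definition quot :: "'a set \<Rightarrow> ('a \<times> 'a) set \<Rightarrow> ('a \<times> 'a) set set \<Rightarrow> ('a set \<times> 'a set) set set" where
"quot \<Omega> e S = {{(\<Gamma>, \<Delta>). \<Gamma> \<in> \<Omega> // e \<and> \<Delta> \<in> \<Omega> // e \<and> s \<inter> (\<Gamma> \<times> \<Delta>) \<noteq> {}} | s. s \<in> S} - {{}}"

definition rel_image :: "('a \<Rightarrow> 'b) \<Rightarrow> ('a \<times> 'a) set set \<Rightarrow> ('b \<times> 'b) set set" where
"rel_image f S = {map_prod f f ` s | s. s \<in> S}"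

definition wr_eq :: "'a set \<Rightarrow> 'b set \<Rightarrow> (('a \<times> 'b) \<times> ('a \<times> 'b)) set" where
"wr_eq \<Omega>1 \<Omega>2 = {(x, y). x \<in> \<Omega>1 \<times> \<Omega>2 \<and> y \<in> \<Omega>1 \<times> \<Omega>2 \<and> snd x = snd y}"

definition wr_cond ::
  "'a set \<Rightarrow> ('a \<times> 'a) set set \<Rightarrow> 'b set \<Rightarrow> ('b \<times> 'b) set set
     \<Rightarrow> (('a \<times> 'b) \<times> ('a \<times> 'b)) set set \<Rightarrow> bool" where
"wr_cond \<Omega>1 S1 \<Omega>2 S2 S \<longleftrightarrow>
   coherent_config (\<Omega>1 \<times> \<Omega>2) S \<and>
   wr_eq \<Omega>1 \<Omega>2 \<in> cc_rels S \<and>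
   (\<forall>a\<in>\<Omega>2. restr S (\<Omega>1 \<times> {a}) = rel_image (\<lambda>x. (x, a)) S1) \<and>
   quot (\<Omega>1 \<times> \<Omega>2) (wr_eq \<Omega>1 \<Omega>2) S = rel_image (\<lambda>a. \<Omega>1 \<times> {a}) S2"

definition is_wreath ::
  "'a set \<Rightarrow> ('a \<times> 'a) set set \<Rightarrow> 'b set \<Rightarrow> ('b \<times> 'b) set set
     \<Rightarrow> (('a \<times> 'b) \<times> ('a \<times> 'b)) set set \<Rightarrow> bool" where
"is_wreath \<Omega>1 S1 \<Omega>2 S2 S \<longleftrightarrow>
   wr_cond \<Omega>1 S1 \<Omega>2 S2 S \<and> (\<forall>S'. wr_cond \<Omega>1 S1 \<Omega>2 S2 S' \<longrightarrow> fission S S')"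

end

theory Submission
  imports Defs
begin

lemma ccD:
  assumes "coherent_config \<Omega> S"
  shows "finite \<Omega>" "\<forall>s\<in>S. s \<noteq> {}" "\<Union>S = \<Omega> \<times> \<Omega>"
   "\<forall>s\<in>S. \<forall>t\<in>S. s \<noteq> t \<longrightarrow> s \<inter> t = {}"
   "\<exists>T\<subseteq>S. \<Union>T = Id_on \<Omega>"
   "\<forall>s\<in>S. converse s \<in> S"
   "\<forall>r\<in>S. \<forall>s\<in>S. \<forall>t\<in>S. \<forall>p\<in>t. \<forall>q\<in>t.
      card {\<gamma>. (fst p, \<gamma>) \<in> r \<and> (\<gamma>, snd p) \<in> s} =
      card {\<gamma>. (fst q, \<gamma>) \<in> r \<and> (\<gamma>, snd q) \<in> s}"
proof -
  note H = assms[unfolded coherent_config_def]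
  show "finite \<Omega>" using H by (elim conjE)
  show "\<forall>s\<in>S. s \<noteq> {}" using H by (elim conjE)
  show "\<Union>S = \<Omega> \<times> \<Omega>" using H by (elim conjE)
  show "\<forall>s\<in>S. \<forall>t\<in>S. s \<noteq> t \<longrightarrow> s \<inter> t = {}" using H by (elim conjE)
  show "\<exists>T\<subseteq>S. \<Union>T = Id_on \<Omega>" using H by (elim conjE)
  show "\<forall>s\<in>S. converse s \<in> S" using H by (elim conjE)
  show "\<forall>r\<in>S. \<forall>s\<in>S. \<forall>t\<in>S. \<forall>p\<in>t. \<forall>q\<in>t.
      card {\<gamma>. (fst p, \<gamma>) \<in> r \<and> (\<gamma>, snd p) \<in> s} =
      card {\<gamma>. (fst q, \<gamma>) \<in> r \<and> (\<gamma>, snd q) \<in> s}" using H by (elim conjE)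
qed

lemma ccI:
  assumes "finite \<Omega>" "\<forall>s\<in>S. s \<noteq> {}" "\<Union>S = \<Omega> \<times> \<Omega>"
   "\<forall>s\<in>S. \<forall>t\<in>S. s \<noteq> t \<longrightarrow> s \<inter> t = {}"
   "\<exists>T\<subseteq>S. \<Union>T = Id_on \<Omega>"
   "\<forall>s\<in>S. converse s \<in> S"
   "\<forall>r\<in>S. \<forall>s\<in>S. \<forall>t\<in>S. \<forall>p\<in>t. \<forall>q\<in>t.
      card {\<gamma>. (fst p, \<gamma>) \<in> r \<and> (\<gamma>, snd p) \<in> s} =
      card {\<gamma>. (fst q, \<gamma>) \<in> r \<and> (\<gamma>, snd q) \<in> s}"
  shows "coherent_config \<Omega> S"
  unfolding coherent_config_def by (intro conjI) (rule assms)+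

lemma cc_sub: "coherent_config \<Omega> S \<Longrightarrow> s \<in> S \<Longrightarrow> s \<subseteq> \<Omega> \<times> \<Omega>"
  using ccD(3) by blast
lemma cc_ne: "coherent_config \<Omega> S \<Longrightarrow> s \<in> S \<Longrightarrow> s \<noteq> {}"
  using ccD(2) by blast
lemma cc_fin: "coherent_config \<Omega> S \<Longrightarrow> finite \<Omega>"
  using ccD(1) by blast
lemma cc_part: "coherent_config \<Omega> S \<Longrightarrow> s \<in> S \<Longrightarrow> t \<in> S \<Longrightarrow> p \<in> s \<Longrightarrow> p \<in> t \<Longrightarrow> s = t"
  using ccD(4) by blast
lemma cc_cover: "coherent_config \<Omega> S \<Longrightarrow> p \<in> \<Omega> \<times> \<Omega> \<Longrightarrow> \<exists>s\<in>S. p \<in> s"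
  using ccD(3) by blast
lemma cc_conv: "coherent_config \<Omega> S \<Longrightarrow> s \<in> S \<Longrightarrow> converse s \<in> S"
  using ccD(6) by blast
lemma cc_count: "coherent_config \<Omega> S \<Longrightarrow> r \<in> S \<Longrightarrow> s \<in> S \<Longrightarrow> t \<in> S \<Longrightarrow> p \<in> t \<Longrightarrow> q \<in> t \<Longrightarrow>
      card {\<gamma>. (fst p, \<gamma>) \<in> r \<and> (\<gamma>, snd p) \<in> s} =
      card {\<gamma>. (fst q, \<gamma>) \<in> r \<and> (\<gamma>, snd q) \<in> s}"
  by (drule ccD(7)) blast

lemma rel_meet: "coherent_config \<Omega> S \<Longrightarrow> u \<in> cc_rels S \<Longrightarrow> s \<in> S \<Longrightarrow> p \<in> s \<Longrightarrow> p \<in> u \<Longrightarrow> s \<subseteq> u"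
  unfolding cc_rels_def using cc_part by blast

lemma fiber_row:
  assumes cc: "coherent_config \<Omega> S" and s: "s \<in> S" "(x,y) \<in> s" and G: "Id_on G \<in> S" "x \<in> G"
    and p: "(x',y') \<in> s"
  shows "x' \<in> G"
proof -
  have "card {\<gamma>. (fst (x,y), \<gamma>) \<in> Id_on G \<and> (\<gamma>, snd (x,y)) \<in> s} =
      card {\<gamma>. (fst (x',y'), \<gamma>) \<in> Id_on G \<and> (\<gamma>, snd (x',y')) \<in> s}"
    by (rule cc_count[OF cc G(1) s(1) s(1) s(2) p])
  moreover have "{\<gamma>. (fst (x,y), \<gamma>) \<in> Id_on G \<and> (\<gamma>, snd (x,y)) \<in> s} = {x}" using s G by auto
  ultimately have "card {\<gamma>. (x', \<gamma>) \<in> Id_on G \<and> (\<gamma>, y') \<in> s} = 1" by simp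
  then have "{\<gamma>. (x', \<gamma>) \<in> Id_on G \<and> (\<gamma>, y') \<in> s} \<noteq> {}" by (metis card.empty zero_neq_one)
  then show ?thesis by auto
qed

lemma fiber_col:
  assumes cc: "coherent_config \<Omega> S" and s: "s \<in> S" "(x,y) \<in> s" and G: "Id_on G \<in> S" "y \<in> G"
    and p: "(x',y') \<in> s"
  shows "y' \<in> G"
proof -
  have "card {\<gamma>. (fst (x,y), \<gamma>) \<in> s \<and> (\<gamma>, snd (x,y)) \<in> Id_on G} =
      card {\<gamma>. (fst (x',y'), \<gamma>) \<in> s \<and> (\<gamma>, snd (x',y')) \<in> Id_on G}"
    by (rule cc_count[OF cc s(1) G(1) s(1) s(2) p])
  moreover have "{\<gamma>. (fst (x,y), \<gamma>) \<in> s \<and> (\<gamma>, snd (x,y)) \<in> Id_on G} = {y}" using s G by auto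
  ultimately have "card {\<gamma>. (x', \<gamma>) \<in> s \<and> (\<gamma>, y') \<in> Id_on G} = 1" by simp
  then have "{\<gamma>. (x', \<gamma>) \<in> s \<and> (\<gamma>, y') \<in> Id_on G} \<noteq> {}" by (metis card.empty zero_neq_one)
  then show ?thesis by auto
qed

lemma fiber_cover:
  assumes cc: "coherent_config \<Omega> S" and x: "x \<in> \<Omega>"
  shows "\<exists>G\<in>fibers S. x \<in> G"
proof -
  obtain T where T: "T \<subseteq> S" "\<Union>T = Id_on \<Omega>" using ccD(5)[OF cc] by blast
  then obtain s where s: "s \<in> T" "(x,x) \<in> s" using x by blast
  have sub: "s \<subseteq> Id_on \<Omega>" using s T by blast
  have e: "s = Id_on (fst ` s)"
  proof (rule set_eqI)
    fix p show "p \<in> s \<longleftrightarrow> p \<in> Id_on (fst ` s)"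
    proof
      assume ps: "p \<in> s"
      then obtain a where "p = (a,a)" using sub by blast
      then show "p \<in> Id_on (fst ` s)" using ps by force
    next
      assume "p \<in> Id_on (fst ` s)"
      then obtain a where a: "p = (a,a)" "a \<in> fst ` s" by blast
      then obtain q where q: "q \<in> s" "fst q = a" by blast
      then have "q = (a,a)" using sub by (cases q) auto
      then show "p \<in> s" using a q by simp
    qed
  qed
  have sS: "s \<in> S" using s T by blast
  have "Id_on (fst ` s) \<in> S" using sS e by metis
  then have "fst ` s \<in> fibers S" unfolding fibers_def by simp
  moreover have "x \<in> fst ` s" using s(2) by (metis fst_conv image_eqI)
  ultimately show ?thesis by blast
qed

lemma fiber_sub: "coherent_config \<Omega> S \<Longrightarrow> G \<in> fibers S \<Longrightarrow> G \<subseteq> \<Omega>"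
  unfolding fibers_def using cc_sub by blast
lemma fiber_ne: "coherent_config \<Omega> S \<Longrightarrow> G \<in> fibers S \<Longrightarrow> G \<noteq> {}"
  unfolding fibers_def using cc_ne by fastforce
lemma fiber_uniq: "coherent_config \<Omega> S \<Longrightarrow> G \<in> fibers S \<Longrightarrow> G' \<in> fibers S \<Longrightarrow> x \<in> G \<Longrightarrow> x \<in> G' \<Longrightarrow> G = G'"
proof -
  assume a: "coherent_config \<Omega> S" "G \<in> fibers S" "G' \<in> fibers S" "x \<in> G" "x \<in> G'"
  then have "Id_on G = Id_on G'" using cc_part[OF a(1), of "Id_on G" "Id_on G'" "(x,x)"] unfolding fibers_def by blast
  moreover have "fst ` Id_on A = A" for A :: "'a set" by force
  ultimately show ?thesis by metis
qed

lemma valency: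
  assumes cc: "coherent_config \<Omega> S" and r: "r \<in> S" "(x,y) \<in> r" and G: "Id_on G \<in> S" "x \<in> G" "x' \<in> G"
  shows "\<exists>g. (x', g) \<in> r"
proof -
  have eq: "card {\<gamma>. (fst (x,x), \<gamma>) \<in> r \<and> (\<gamma>, snd (x,x)) \<in> converse r} =
      card {\<gamma>. (fst (x',x'), \<gamma>) \<in> r \<and> (\<gamma>, snd (x',x')) \<in> converse r}"
    by (rule cc_count[OF cc r(1) cc_conv[OF cc r(1)] G(1)]) (use G in auto)
  have "finite {\<gamma>. (x, \<gamma>) \<in> r}"
    by (rule finite_subset[OF _ cc_fin[OF cc]]) (use cc_sub[OF cc r(1)] in blast)
  moreover have "{\<gamma>. (x, \<gamma>) \<in> r} \<noteq> {}" using r by blast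
  ultimately have "card {\<gamma>. (x, \<gamma>) \<in> r} > 0" by (simp add: card_gt_0_iff)
  then have "card {\<gamma>. (x', \<gamma>) \<in> r} > 0" using eq by simp
  then show ?thesis by (auto simp: card_gt_0_iff)
qed

lemma complete_below:
  assumes cc': "coherent_config \<Omega> S'" and cp: "complete_cc S'" and f: "fission S' S''"
    and ne: "\<forall>s\<in>S''. s \<noteq> {}" and xy: "x \<in> \<Omega>" "y \<in> \<Omega>"
  shows "{(x,y)} \<in> S''"
proof -
  obtain s where s: "s \<in> S'" "(x,y) \<in> s" using cc_cover[OF cc'] xy by blast
  then have "s = {(x,y)}" using cp unfolding complete_cc_def by fastforce
  then have "{(x,y)} \<in> cc_rels S'" using s unfolding cc_rels_def by blast
  then have "{(x,y)} \<in> cc_rels S''" using f unfolding fission_def by blast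
  then obtain U where U: "U \<subseteq> S''" "\<Union>U = {(x,y)}" unfolding cc_rels_def by blast
  then obtain u where u: "u \<in> U" "(x,y) \<in> u" by blast
  then have "u \<subseteq> {(x,y)}" using U by blast
  then have "u = {(x,y)}" using u by blast
  then show ?thesis using U u by blast
qed



lemma restr_cc:
  assumes cc: "coherent_config \<Omega> S" and e: "e \<in> cc_rels S" and D: "D \<subseteq> \<Omega>" "D \<times> D \<subseteq> e"
    and cl: "\<And>x y. x \<in> D \<Longrightarrow> (x,y) \<in> e \<Longrightarrow> y \<in> D"
  shows "coherent_config D (restr S D)"
proof -
  have fin: "finite D" using cc_fin[OF cc] D finite_subset by blast
  have un: "\<Union>(restr S D) = D \<times> D"
  proof
    show "\<Union>(restr S D) \<subseteq> D \<times> D" unfolding restr_def by blast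
    show "D \<times> D \<subseteq> \<Union>(restr S D)"
    proof
      fix p assume p: "p \<in> D \<times> D"
      then obtain s where "s \<in> S" "p \<in> s" using cc_cover[OF cc] D by blast
      then show "p \<in> \<Union>(restr S D)" using p unfolding restr_def by blast
    qed
  qed
  have dis: "\<forall>s\<in>restr S D. \<forall>t\<in>restr S D. s \<noteq> t \<longrightarrow> s \<inter> t = {}"
    unfolding restr_def using cc_part[OF cc] by blast
  obtain T where T: "T \<subseteq> S" "\<Union>T = Id_on \<Omega>" using ccD(5)[OF cc] by blast
  have idd: "\<exists>T'\<subseteq>restr S D. \<Union>T' = Id_on D"
  proof (intro exI conjI)
    show "{t \<inter> (D \<times> D) |t. t \<in> T} - {{}} \<subseteq> restr S D" using T unfolding restr_def by blast
    show "\<Union>({t \<inter> (D \<times> D) |t. t \<in> T} - {{}}) = Id_on D"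
    proof
      show "\<Union>({t \<inter> (D \<times> D) |t. t \<in> T} - {{}}) \<subseteq> Id_on D"
      proof
        fix p assume "p \<in> \<Union>({t \<inter> (D \<times> D) |t. t \<in> T} - {{}})"
        then obtain t where t: "t \<in> T" "p \<in> t" "p \<in> D \<times> D" by blast
        then have "p \<in> Id_on \<Omega>" using T by blast
        then show "p \<in> Id_on D" using t by auto
      qed
      show "Id_on D \<subseteq> \<Union>({t \<inter> (D \<times> D) |t. t \<in> T} - {{}})"
      proof
        fix p assume p: "p \<in> Id_on D"
        then have "p \<in> \<Union>T" using T D by auto
        then obtain t where t: "t \<in> T" "p \<in> t" by blast
        then have "p \<in> t \<inter> (D \<times> D)" "t \<inter> (D \<times> D) \<noteq> {}" using p by auto
        then show "p \<in> \<Union>({t \<inter> (D \<times> D) |t. t \<in> T} - {{}})" using t by blast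
      qed
    qed
  qed
  have cv: "\<forall>s\<in>restr S D. converse s \<in> restr S D"
  proof
    fix s assume "s \<in> restr S D"
    then obtain t where t: "t \<in> S" "s = t \<inter> (D \<times> D)" "s \<noteq> {}" unfolding restr_def by blast
    then have "converse s = converse t \<inter> (D \<times> D)" by auto
    moreover have "converse s \<noteq> {}" using t by auto
    ultimately show "converse s \<in> restr S D" using cc_conv[OF cc t(1)] unfolding restr_def by blast
  qed
  have ct: "card {\<gamma>. (fst p, \<gamma>) \<in> r' \<and> (\<gamma>, snd p) \<in> s'} = card {\<gamma>. (fst q, \<gamma>) \<in> r' \<and> (\<gamma>, snd q) \<in> s'}"
    if r': "r' \<in> restr S D" and s': "s' \<in> restr S D" and t': "t' \<in> restr S D" and p: "p \<in> t'" and q: "q \<in> t'"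
    for r' s' t' p q
  proof -
    obtain r where r: "r \<in> S" "r' = r \<inter> (D \<times> D)" "r' \<noteq> {}" using r' unfolding restr_def by blast
    obtain s where s: "s \<in> S" "s' = s \<inter> (D \<times> D)" using s' unfolding restr_def by blast
    obtain t where t: "t \<in> S" "t' = t \<inter> (D \<times> D)" using t' unfolding restr_def by blast
    have re: "r \<subseteq> e" using r D rel_meet[OF cc e r(1)] by blast
    have eq: "{\<gamma>. (fst z, \<gamma>) \<in> r' \<and> (\<gamma>, snd z) \<in> s'} = {\<gamma>. (fst z, \<gamma>) \<in> r \<and> (\<gamma>, snd z) \<in> s}"
      if "z \<in> t'" for z
    proof -
      have "fst z \<in> D" "snd z \<in> D" using that t by auto
      then show ?thesis using r s re cl by blast
    qed
    show ?thesis using eq[OF p] eq[OF q] cc_count[OF cc r(1) s(1) t(1)] p q t by auto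
  qed
  show ?thesis
  proof (rule ccI[OF fin _ un dis idd cv])
    show "\<forall>s\<in>restr S D. s \<noteq> {}" by (auto simp: restr_def)
  qed (intro ballI, rule ct, assumption+)
qed

lemma cc_relsI: "T \<subseteq> S \<Longrightarrow> X = \<Union>T \<Longrightarrow> X \<in> cc_rels S"
  unfolding cc_rels_def by blast

lemma Union_minus_empty: "\<Union>(A - {{}}) = \<Union>A" by blast

lemma rel_restr: "Y \<in> cc_rels S \<Longrightarrow> Y \<inter> (D \<times> D) \<in> cc_rels (restr S D)"
proof -
  assume "Y \<in> cc_rels S"
  then obtain T where T: "T \<subseteq> S" "Y = \<Union>T" unfolding cc_rels_def by blast
  have "{t \<inter> (D \<times> D) |t. t \<in> T} - {{}} \<subseteq> restr S D" using T unfolding restr_def by blast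
  moreover have "\<Union>({t \<inter> (D \<times> D) |t. t \<in> T} - {{}}) = Y \<inter> (D \<times> D)"
  proof -
    have e1: "{t \<inter> (D \<times> D) |t. t \<in> T} = (\<lambda>t. t \<inter> (D \<times> D)) ` T" by blast
    have "\<Union>((\<lambda>t. t \<inter> (D \<times> D)) ` T) = (\<Union>T) \<inter> (D \<times> D)" by blast
    then show ?thesis unfolding e1 Union_minus_empty using T(2) by simp
  qed
  ultimately show ?thesis by (intro cc_relsI) auto
qed

lemma restr_rel: "X \<in> cc_rels (restr S D) \<Longrightarrow> \<exists>Y\<in>cc_rels S. X = Y \<inter> (D \<times> D)"
proof -
  assume "X \<in> cc_rels (restr S D)"
  then obtain T where T: "T \<subseteq> restr S D" "X = \<Union>T" unfolding cc_rels_def by blast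
  let ?Y = "\<Union>{s \<in> S. s \<inter> (D \<times> D) \<in> T}"
  have "?Y \<in> cc_rels S" unfolding cc_rels_def by blast
  moreover have "X = ?Y \<inter> (D \<times> D)"
  proof
    show "X \<subseteq> ?Y \<inter> (D \<times> D)" using T unfolding restr_def by blast
    show "?Y \<inter> (D \<times> D) \<subseteq> X" using T by blast
  qed
  ultimately show ?thesis by blast
qed

lemma restr_fission: "fission S S'' \<Longrightarrow> fission (restr S D) (restr S'' D)"
  unfolding fission_def using restr_rel rel_restr by blast

lemma restr_uof:
  assumes "union_of_fibers S P"
  shows "union_of_fibers (restr S D) (P \<inter> D)"
proof -
  obtain F where F: "F \<subseteq> fibers S" "P = \<Union>F" using assms unfolding union_of_fibers_def by blast
  let ?F = "{G \<inter> D | G. G \<in> F} - {{}}"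
  have "?F \<subseteq> fibers (restr S D)"
  proof
    fix H assume "H \<in> ?F"
    then obtain G where G: "G \<in> F" "H = G \<inter> D" "H \<noteq> {}" by blast
    have "Id_on H = Id_on G \<inter> (D \<times> D)" using G by (auto simp: Id_on_def)
    moreover have "Id_on G \<in> S" using G F unfolding fibers_def by blast
    moreover have "Id_on H \<noteq> {}" using G by auto
    ultimately show "H \<in> fibers (restr S D)" unfolding fibers_def restr_def by blast
  qed
  moreover have "P \<inter> D = \<Union>?F" using F by auto
  ultimately show ?thesis unfolding union_of_fibers_def by blast
qed

lemma subcc:
  assumes cc: "coherent_config \<Omega> S" and F: "F \<subseteq> fibers S"
  shows "coherent_config (\<Union>F) {s \<in> S. s \<subseteq> \<Union>F \<times> \<Union>F}"
proof -
  let ?X = "\<Union>F"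
  have XO: "?X \<subseteq> \<Omega>" using F fiber_sub[OF cc] by blast
  have inX: "s \<subseteq> ?X \<times> ?X" if sS: "s \<in> S" "(x,y) \<in> s" and xX: "x \<in> ?X" "y \<in> ?X" for s x y
  proof
    fix p assume p: "p \<in> s"
    obtain G where G: "G \<in> F" "x \<in> G" using xX by blast
    obtain H where H: "H \<in> F" "y \<in> H" using xX by blast
    have "Id_on G \<in> S" "Id_on H \<in> S" using G H F unfolding fibers_def by blast+
    then have "fst p \<in> G" "snd p \<in> H"
      using fiber_row[OF cc sS _ G(2), of "fst p" "snd p"] fiber_col[OF cc sS _ H(2), of "fst p" "snd p"] p
      by auto
    then show "p \<in> ?X \<times> ?X" using G H by (cases p) auto
  qed
  have fin: "finite ?X" using cc_fin[OF cc] XO finite_subset by blast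
  have un: "\<Union>{s \<in> S. s \<subseteq> ?X \<times> ?X} = ?X \<times> ?X"
  proof
    show "?X \<times> ?X \<subseteq> \<Union>{s \<in> S. s \<subseteq> ?X \<times> ?X}"
    proof
      fix p assume p: "p \<in> ?X \<times> ?X"
      then obtain s where s: "s \<in> S" "p \<in> s" using cc_cover[OF cc] XO by blast
      then have "s \<subseteq> ?X \<times> ?X" using inX p by (cases p) auto
      then show "p \<in> \<Union>{s \<in> S. s \<subseteq> ?X \<times> ?X}" using s by blast
    qed
  qed blast
  obtain T where T: "T \<subseteq> S" "\<Union>T = Id_on \<Omega>" using ccD(5)[OF cc] by blast
  have idd: "\<Union>{t \<in> T. t \<subseteq> ?X \<times> ?X} = Id_on ?X"
  proof
    show "\<Union>{t \<in> T. t \<subseteq> ?X \<times> ?X} \<subseteq> Id_on ?X"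
    proof
      fix p assume "p \<in> \<Union>{t \<in> T. t \<subseteq> ?X \<times> ?X}"
      then obtain t where t: "t \<in> T" "t \<subseteq> ?X \<times> ?X" "p \<in> t" by blast
      then have "p \<in> Id_on \<Omega>" using T(2) by blast
      then obtain a where a: "p = (a,a)" by blast
      then have "a \<in> ?X" using t by blast
      then have "(a,a) \<in> Id_on ?X" by (rule Id_onI)
      then show "p \<in> Id_on ?X" using a by simp
    qed
    show "Id_on ?X \<subseteq> \<Union>{t \<in> T. t \<subseteq> ?X \<times> ?X}"
    proof
      fix p assume p: "p \<in> Id_on ?X"
      then have "p \<in> \<Union>T" using T XO by auto
      then obtain t where t: "t \<in> T" "p \<in> t" by blast
      then have "t \<subseteq> ?X \<times> ?X" using inX[of t] p T by (cases p) auto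
      then show "p \<in> \<Union>{t \<in> T. t \<subseteq> ?X \<times> ?X}" using t by blast
    qed
  qed
  show ?thesis
  proof (rule ccI[OF fin _ un])
    show "\<exists>T'\<subseteq>{s \<in> S. s \<subseteq> ?X \<times> ?X}. \<Union>T' = Id_on ?X"
      using idd T by (intro exI[of _ "{t \<in> T. t \<subseteq> ?X \<times> ?X}"]) blast
    show "\<forall>s\<in>{s \<in> S. s \<subseteq> ?X \<times> ?X}. s \<noteq> {}" using cc_ne[OF cc] by blast
    show "\<forall>s\<in>{s \<in> S. s \<subseteq> ?X \<times> ?X}. \<forall>t\<in>{s \<in> S. s \<subseteq> ?X \<times> ?X}. s \<noteq> t \<longrightarrow> s \<inter> t = {}"
      using cc_part[OF cc] by blast
    show "\<forall>s\<in>{s \<in> S. s \<subseteq> ?X \<times> ?X}. converse s \<in> {s \<in> S. s \<subseteq> ?X \<times> ?X}"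
      using cc_conv[OF cc] by blast
  qed (intro ballI, rule cc_count[OF cc], auto)
qed

lemma transport_cc:
  assumes cc: "coherent_config X S" and inj: "inj_on f X"
  shows "coherent_config (f ` X) (rel_image f S)"
proof -
  let ?g = "map_prod f f"
  have injg: "inj_on ?g (X \<times> X)" using inj by (auto simp: inj_on_def)
  have sub: "s \<subseteq> X \<times> X" if "s \<in> S" for s using cc_sub[OF cc that] .
  have fin: "finite (f ` X)" using cc_fin[OF cc] by blast
  have ne: "\<forall>s\<in>rel_image f S. s \<noteq> {}" using cc_ne[OF cc] unfolding rel_image_def by blast
  have un: "\<Union>(rel_image f S) = f ` X \<times> f ` X"
  proof -
    have "\<Union>(rel_image f S) = ?g ` \<Union>S" unfolding rel_image_def by blast
    also have "\<Union>S = X \<times> X" using ccD(3)[OF cc] .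
    finally show ?thesis by auto
  qed
  have dis: "\<forall>s\<in>rel_image f S. \<forall>t\<in>rel_image f S. s \<noteq> t \<longrightarrow> s \<inter> t = {}"
  proof (intro ballI impI)
    fix s' t' assume s': "s' \<in> rel_image f S" and t': "t' \<in> rel_image f S" and d: "s' \<noteq> t'"
    obtain s where s: "s \<in> S" "s' = ?g ` s" using s' unfolding rel_image_def by blast
    obtain t where t: "t \<in> S" "t' = ?g ` t" using t' unfolding rel_image_def by blast
    have "s \<noteq> t" using s t d by blast
    then have "s \<inter> t = {}" using ccD(4)[OF cc] s t by blast
    then have "?g ` s \<inter> ?g ` t = {}"
      using inj_on_image_Int[OF injg sub[OF s(1)] sub[OF t(1)]] by simp
    then show "s' \<inter> t' = {}" using s t by simp
  qed
  obtain T where T: "T \<subseteq> S" "\<Union>T = Id_on X" using ccD(5)[OF cc] by blast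
  have idd: "\<exists>T'\<subseteq>rel_image f S. \<Union>T' = Id_on (f ` X)"
  proof (intro exI conjI)
    show "(\<lambda>t. ?g ` t) ` T \<subseteq> rel_image f S" using T unfolding rel_image_def by blast
    have "\<Union>((\<lambda>t. ?g ` t) ` T) = ?g ` Id_on X" using T by blast
    also have "\<dots> = Id_on (f ` X)" by (auto simp: Id_on_def)
    finally show "\<Union>((\<lambda>t. ?g ` t) ` T) = Id_on (f ` X)" .
  qed
  have cv: "\<forall>s\<in>rel_image f S. converse s \<in> rel_image f S"
  proof
    fix s' assume "s' \<in> rel_image f S"
    then obtain s where s: "s \<in> S" "s' = ?g ` s" unfolding rel_image_def by blast
    have "converse s' = ?g ` converse s" using s by auto
    then show "converse s' \<in> rel_image f S" using cc_conv[OF cc s(1)] unfolding rel_image_def by blast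
  qed
  have ct: "card {\<gamma>. (fst p, \<gamma>) \<in> r' \<and> (\<gamma>, snd p) \<in> s'} = card {\<gamma>. (fst q, \<gamma>) \<in> r' \<and> (\<gamma>, snd q) \<in> s'}"
    if r': "r' \<in> rel_image f S" and s': "s' \<in> rel_image f S" and t': "t' \<in> rel_image f S" and p: "p \<in> t'" and q: "q \<in> t'"
    for r' s' t' p q
  proof -
    obtain r where r: "r \<in> S" "r' = ?g ` r" using r' unfolding rel_image_def by blast
    obtain s where s: "s \<in> S" "s' = ?g ` s" using s' unfolding rel_image_def by blast
    obtain t where t: "t \<in> S" "t' = ?g ` t" using t' unfolding rel_image_def by blast
    have key: "card {\<gamma>. (fst z', \<gamma>) \<in> r' \<and> (\<gamma>, snd z') \<in> s'} = card {\<gamma>. (fst z, \<gamma>) \<in> r \<and> (\<gamma>, snd z) \<in> s}"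
      if z: "z \<in> t" "z' = ?g z" for z z'
    proof -
      obtain x y where xy: "z = (x,y)" by (cases z)
      have xX: "x \<in> X" "y \<in> X" using sub[OF t(1)] z xy by auto
      have "{\<gamma>. (f x, \<gamma>) \<in> r' \<and> (\<gamma>, f y) \<in> s'} = f ` {\<gamma>. (x, \<gamma>) \<in> r \<and> (\<gamma>, y) \<in> s}"
      proof
        show "{\<gamma>. (f x, \<gamma>) \<in> r' \<and> (\<gamma>, f y) \<in> s'} \<subseteq> f ` {\<gamma>. (x, \<gamma>) \<in> r \<and> (\<gamma>, y) \<in> s}"
        proof
          fix c assume "c \<in> {\<gamma>. (f x, \<gamma>) \<in> r' \<and> (\<gamma>, f y) \<in> s'}"
          then obtain a b a' b' where ab: "(a,b) \<in> r" "f a = f x" "f b = c" "(a',b') \<in> s" "f a' = c" "f b' = f y"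
            using r s by auto
          have X: "a \<in> X" "b \<in> X" "a' \<in> X" "b' \<in> X" using sub[OF r(1)] sub[OF s(1)] ab by auto
          have "a = x" "b' = y" "a' = b" using inj ab X xX unfolding inj_on_def by metis+
          then show "c \<in> f ` {\<gamma>. (x, \<gamma>) \<in> r \<and> (\<gamma>, y) \<in> s}" using ab by auto
        qed
        show "f ` {\<gamma>. (x, \<gamma>) \<in> r \<and> (\<gamma>, y) \<in> s} \<subseteq> {\<gamma>. (f x, \<gamma>) \<in> r' \<and> (\<gamma>, f y) \<in> s'}"
          using r s by force
      qed
      moreover have "inj_on f {\<gamma>. (x, \<gamma>) \<in> r \<and> (\<gamma>, y) \<in> s}"
        by (rule inj_on_subset[OF inj]) (use sub[OF r(1)] in blast)
      ultimately show ?thesis using z xy by (simp add: card_image)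
    qed
    obtain zp where zp: "zp \<in> t" "p = ?g zp" using p unfolding t(2) by auto
    obtain zq where zq: "zq \<in> t" "q = ?g zq" using q unfolding t(2) by auto
    show ?thesis using key[OF zp] key[OF zq] cc_count[OF cc r(1) s(1) t(1) zp(1) zq(1)] by simp
  qed
  show ?thesis
    by (rule ccI[OF fin ne un dis idd cv]) (intro ballI, rule ct, assumption+)
qed



lemma wr_eq_class:
  assumes "x \<in> \<Omega>1 \<times> \<Omega>2"
  shows "wr_eq \<Omega>1 \<Omega>2 `` {x} = \<Omega>1 \<times> {snd x}"
  using assms unfolding wr_eq_def by auto

lemma quot_classes:
  assumes ne: "\<Omega>1 \<noteq> {}"
  shows "\<Gamma> \<in> (\<Omega>1 \<times> \<Omega>2) // wr_eq \<Omega>1 \<Omega>2 \<longleftrightarrow> (\<exists>a\<in>\<Omega>2. \<Gamma> = \<Omega>1 \<times> {a})"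
proof
  assume "\<Gamma> \<in> (\<Omega>1 \<times> \<Omega>2) // wr_eq \<Omega>1 \<Omega>2"
  then obtain x where x: "x \<in> \<Omega>1 \<times> \<Omega>2" "\<Gamma> = wr_eq \<Omega>1 \<Omega>2 `` {x}" unfolding quotient_def by blast
  then show "\<exists>a\<in>\<Omega>2. \<Gamma> = \<Omega>1 \<times> {a}" using wr_eq_class[OF x(1)] by auto
next
  assume "\<exists>a\<in>\<Omega>2. \<Gamma> = \<Omega>1 \<times> {a}"
  then obtain a where a: "a \<in> \<Omega>2" "\<Gamma> = \<Omega>1 \<times> {a}" by blast
  obtain x1 where x1: "x1 \<in> \<Omega>1" using ne by blast
  have "(x1,a) \<in> \<Omega>1 \<times> \<Omega>2" using x1 a by simp
  moreover have "\<Gamma> = wr_eq \<Omega>1 \<Omega>2 `` {(x1,a)}" using wr_eq_class[OF calculation] a by simp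
  ultimately show "\<Gamma> \<in> (\<Omega>1 \<times> \<Omega>2) // wr_eq \<Omega>1 \<Omega>2" unfolding quotient_def by blast
qed

lemma blk_inj: "\<Omega>1 \<noteq> {} \<Longrightarrow> \<Omega>1 \<times> {a} = \<Omega>1 \<times> {b} \<Longrightarrow> a = b"
proof -
  assume "\<Omega>1 \<noteq> {}" "\<Omega>1 \<times> {a} = \<Omega>1 \<times> {b}"
  then obtain x where "x \<in> \<Omega>1" by blast
  then have "(x,a) \<in> \<Omega>1 \<times> {b}" using \<open>\<Omega>1 \<times> {a} = \<Omega>1 \<times> {b}\<close> by (metis SigmaI singletonI)
  then show "a = b" by simp
qed

lemma L_rel:
  fixes \<Omega>1 :: "'a set" and \<Omega>2 :: "'b set"
  assumes wc: "wr_cond \<Omega>1 S1 \<Omega>2 S2 S" and cc2: "coherent_config \<Omega>2 S2" and ne: "\<Omega>1 \<noteq> {}"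
    and s2: "s2 \<in> S2"
  shows "{(x,y). x \<in> \<Omega>1 \<times> \<Omega>2 \<and> y \<in> \<Omega>1 \<times> \<Omega>2 \<and> (snd x, snd y) \<in> s2} \<in> cc_rels S"
proof -
  let ?\<Omega> = "\<Omega>1 \<times> \<Omega>2"
  let ?e = "wr_eq \<Omega>1 \<Omega>2"
  define B where "B = (\<lambda>a::'b. \<Omega>1 \<times> {a})"
  define qf where "qf s = {(\<Gamma>, \<Delta>). \<Gamma> \<in> ?\<Omega> // ?e \<and> \<Delta> \<in> ?\<Omega> // ?e \<and> s \<inter> (\<Gamma> \<times> \<Delta>) \<noteq> {}}" for s
  have Binj: "B a = B b \<Longrightarrow> a = b" for a b unfolding B_def by (rule blk_inj[OF ne])
  have cc: "coherent_config ?\<Omega> S" using wc unfolding wr_cond_def by (elim conjE)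
  have q0: "quot ?\<Omega> ?e S = rel_image (\<lambda>a. \<Omega>1 \<times> {a}) S2" using wc unfolding wr_cond_def by (elim conjE)
  have q: "quot ?\<Omega> ?e S = rel_image B S2" using q0 by (simp only: B_def)
  have qS: "qf s \<in> rel_image B S2" if h: "s \<in> S" "qf s \<noteq> {}" for s
  proof -
    have "qf s \<in> {{(\<Gamma>, \<Delta>). \<Gamma> \<in> ?\<Omega> // ?e \<and> \<Delta> \<in> ?\<Omega> // ?e \<and> s \<inter> (\<Gamma> \<times> \<Delta>) \<noteq> {}} | s. s \<in> S}"
      unfolding qf_def using h(1) by blast
    then have "qf s \<in> quot ?\<Omega> ?e S" unfolding quot_def by (rule DiffI) (use h(2) in simp)
    then show ?thesis using q by simp
  qed
  have inq: "(B (snd x), B (snd y)) \<in> qf s" if h: "s \<in> S" "(x,y) \<in> s" for s x y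
  proof -
    have xy: "x \<in> ?\<Omega>" "y \<in> ?\<Omega>" using cc_sub[OF cc h(1)] h(2) by auto
    have sx: "snd x \<in> \<Omega>2" "snd y \<in> \<Omega>2" using xy by (simp_all add: mem_Times_iff)
    have c1: "B (snd x) \<in> ?\<Omega> // ?e" unfolding B_def using quot_classes[OF ne] sx(1) by blast
    have c2: "B (snd y) \<in> ?\<Omega> // ?e" unfolding B_def using quot_classes[OF ne] sx(2) by blast
    have c3: "(x,y) \<in> s \<inter> (B (snd x) \<times> B (snd y))" using xy h(2) by (simp add: mem_Times_iff B_def)
    then have c4: "s \<inter> (B (snd x) \<times> B (snd y)) \<noteq> {}" by (rule ex_in_conv[THEN iffD1, OF exI])
    show ?thesis by (simp only: qf_def mem_Collect_eq case_prod_conv) (intro conjI c1 c2 c4)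
  qed
  have imgD: "(a, b) \<in> s2'" if h: "(B a, B b) \<in> map_prod B B ` s2'" for a b s2'
  proof -
    obtain p where p: "(B a, B b) = map_prod B B p" "p \<in> s2'" using h by (rule imageE)
    then have "B a = B (fst p)" "B b = B (snd p)" by (cases p; simp)+
    then have "a = fst p" "b = snd p" using Binj by blast+
    then show ?thesis using p(2) by simp
  qed
  let ?I = "map_prod B B ` s2"
  let ?L = "{(x,y). x \<in> ?\<Omega> \<and> y \<in> ?\<Omega> \<and> (snd x, snd y) \<in> s2}"
  have "?L = \<Union>{s \<in> S. qf s = ?I}"
  proof (rule set_eqI)
    fix p :: "('a \<times> 'b) \<times> ('a \<times> 'b)"
    obtain x y where p: "p = (x,y)" by (cases p)
    show "p \<in> ?L \<longleftrightarrow> p \<in> \<Union>{s \<in> S. qf s = ?I}"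
    proof
      assume "p \<in> ?L"
      then have xy: "x \<in> ?\<Omega>" "y \<in> ?\<Omega>" "(snd x, snd y) \<in> s2" using p by auto
      obtain s where s: "s \<in> S" "(x,y) \<in> s" using cc_cover[OF cc] xy by blast
      have i: "(B (snd x), B (snd y)) \<in> qf s" by (rule inq[OF s])
      then have "qf s \<noteq> {}" by (rule ex_in_conv[THEN iffD1, OF exI])
      then have "qf s \<in> rel_image B S2" using qS[OF s(1)] by blast
      then obtain s2' where s2': "s2' \<in> S2" "qf s = map_prod B B ` s2'" unfolding rel_image_def by blast
      have "(snd x, snd y) \<in> s2'" using imgD i s2'(2) by simp
      then have "s2' = s2" using cc_part[OF cc2 s2'(1) s2] xy(3) by blast
      then have "qf s = ?I" using s2' by simp
      then have "s \<in> {s \<in> S. qf s = ?I}" using s(1) by simp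
      moreover have "p \<in> s" using s(2) p by simp
      ultimately show "p \<in> \<Union>{s \<in> S. qf s = ?I}" by (rule UnionI)
    next
      assume "p \<in> \<Union>{s \<in> S. qf s = ?I}"
      then obtain s where s: "s \<in> {s \<in> S. qf s = ?I}" "(x,y) \<in> s" using p by (auto elim!: UnionE)
      then have s': "s \<in> S" "qf s = ?I" by simp_all
      have xy: "x \<in> ?\<Omega>" "y \<in> ?\<Omega>" using cc_sub[OF cc s'(1)] s(2) by auto
      have "(B (snd x), B (snd y)) \<in> ?I" using inq[OF s'(1) s(2)] s'(2) by simp
      then have "(snd x, snd y) \<in> s2" by (rule imgD)
      then show "p \<in> ?L" using xy p by simp
    qed
  qed
  then show ?thesis by (intro cc_relsI[of "{s \<in> S. qf s = ?I}"]) auto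
qed



lemma cc_rels_Union:
  assumes "\<forall>u\<in>U. u \<in> cc_rels T"
  shows "\<Union>U \<in> cc_rels T"
proof (rule cc_relsI[of "{t \<in> T. t \<subseteq> \<Union>U}"])
  show "{t \<in> T. t \<subseteq> \<Union>U} \<subseteq> T" by blast
  show "\<Union>U = \<Union>{t \<in> T. t \<subseteq> \<Union>U}"
  proof
    show "\<Union>{t \<in> T. t \<subseteq> \<Union>U} \<subseteq> \<Union>U" by blast
    show "\<Union>U \<subseteq> \<Union>{t \<in> T. t \<subseteq> \<Union>U}"
    proof
      fix p assume "p \<in> \<Union>U"
      then obtain u where u: "u \<in> U" "p \<in> u" by blast
      then obtain W where W: "W \<subseteq> T" "u = \<Union>W" using assms unfolding cc_rels_def by blast
      then obtain t where t: "t \<in> W" "p \<in> t" using u by blast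
      have "t \<subseteq> \<Union>U" using t W u by blast
      then show "p \<in> \<Union>{t \<in> T. t \<subseteq> \<Union>U}" using t W by blast
    qed
  qed
qed

lemma Id_on_img: "map_prod f f ` Id_on A = Id_on (f ` A)"
  by (auto simp: Id_on_def)

lemma basic_in_union:
  assumes cc: "coherent_config \<Omega> S" and F: "F \<subseteq> fibers S"
    and sS: "s \<in> S" "(x,y) \<in> s" and xX: "x \<in> \<Union>F" "y \<in> \<Union>F"
  shows "s \<subseteq> \<Union>F \<times> \<Union>F"
proof
  fix p assume p: "p \<in> s"
  obtain G where G: "G \<in> F" "x \<in> G" using xX by blast
  obtain H where H: "H \<in> F" "y \<in> H" using xX by blast
  have "Id_on G \<in> S" "Id_on H \<in> S" using G H F unfolding fibers_def by blast+
  then have "fst p \<in> G" "snd p \<in> H"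
    using fiber_row[OF cc sS _ G(2), of "fst p" "snd p"] fiber_col[OF cc sS _ H(2), of "fst p" "snd p"] p
    by auto
  then show "p \<in> \<Union>F \<times> \<Union>F" using G H by (cases p) auto
qed

lemma key:
  fixes \<Omega>1 :: "'a set" and \<Omega>2 :: "'b set" and \<Pi> :: "('a \<times> 'b) set set"
  assumes wc: "wr_cond \<Omega>1 S1 \<Omega>2 S2 S" and cc2: "coherent_config \<Omega>2 S2"
    and h5: "\<forall>a\<in>\<Omega>2. gen_base (\<Omega>1 \<times> {a}) (restr S (\<Omega>1 \<times> {a})) ((\<lambda>\<Gamma>. \<Gamma> \<inter> (\<Omega>1 \<times> {a})) ` \<Pi>)"
    and h6: "gen_base \<Omega>2 S2 ((\<lambda>\<Gamma>. snd ` \<Gamma>) ` \<Pi>)"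
    and cc'': "coherent_config (\<Omega>1 \<times> \<Omega>2) S''" and fis: "fission S S''"
    and uof: "\<forall>D\<in>\<Pi>. union_of_fibers S'' D"
    and xy: "x \<in> \<Omega>1 \<times> \<Omega>2" "y \<in> \<Omega>1 \<times> \<Omega>2"
  shows "{(x,y)} \<in> S''"
proof -
  let ?\<Omega> = "\<Omega>1 \<times> \<Omega>2"
  let ?e = "wr_eq \<Omega>1 \<Omega>2"
  have cc: "coherent_config ?\<Omega> S" using wc unfolding wr_cond_def by (elim conjE)
  have e: "?e \<in> cc_rels S" using wc unfolding wr_cond_def by (elim conjE)
  have e'': "?e \<in> cc_rels S''" using e fis unfolding fission_def by blast
  have ne1: "\<Omega>1 \<noteq> {}" using xy by auto
  have eD: "snd u = snd v" if "(u,v) \<in> ?e" for u v using that unfolding wr_eq_def by simp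
  have eI: "(u,v) \<in> ?e" if "u \<in> ?\<Omega>" "v \<in> ?\<Omega>" "snd u = snd v" for u v
    using that unfolding wr_eq_def by simp
  have blockc: "{(u,v)} \<in> restr S'' (\<Omega>1 \<times> {a})"
    if a: "a \<in> \<Omega>2" and uv: "u \<in> \<Omega>1 \<times> {a}" "v \<in> \<Omega>1 \<times> {a}" for a u v
  proof -
    let ?D = "\<Omega>1 \<times> {a}"
    have D1: "?D \<subseteq> ?\<Omega>" using a by auto
    have D2: "?D \<times> ?D \<subseteq> ?e"
    proof
      fix p assume "p \<in> ?D \<times> ?D"
      then show "p \<in> ?e" using D1 eI by (cases p) (auto simp: mem_Times_iff)
    qed
    have D3: "w \<in> ?D" if "u \<in> ?D" "(u,w) \<in> ?e" for u w
      using that unfolding wr_eq_def by (auto simp: mem_Times_iff)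
    have ccRD: "coherent_config ?D (restr S'' ?D)" by (rule restr_cc[OF cc'' e'' D1 D2 D3])
    obtain Sa where Sa: "is_Pi_fission ?D (restr S ?D) ((\<lambda>\<Gamma>. \<Gamma> \<inter> ?D) ` \<Pi>) Sa" "complete_cc Sa"
      using h5 a unfolding gen_base_def by blast
    have cca: "coherent_config ?D Sa" using Sa(1) unfolding is_Pi_fission_def by (elim conjE)
    have mn: "\<forall>S3. coherent_config ?D S3 \<and> fission (restr S ?D) S3 \<and> (\<forall>\<Delta>\<in>(\<lambda>\<Gamma>. \<Gamma> \<inter> ?D) ` \<Pi>. union_of_fibers S3 \<Delta>)
          \<longrightarrow> fission Sa S3" using Sa(1) unfolding is_Pi_fission_def by (elim conjE)
    have u3: "\<forall>\<Delta>\<in>(\<lambda>\<Gamma>. \<Gamma> \<inter> ?D) ` \<Pi>. union_of_fibers (restr S'' ?D) \<Delta>"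
    proof
      fix \<Delta> assume "\<Delta> \<in> (\<lambda>\<Gamma>. \<Gamma> \<inter> ?D) ` \<Pi>"
      then obtain \<Gamma> where "\<Gamma> \<in> \<Pi>" "\<Delta> = \<Gamma> \<inter> ?D" by blast
      then show "union_of_fibers (restr S'' ?D) \<Delta>" using restr_uof uof by blast
    qed
    have "fission Sa (restr S'' ?D)" using mn ccRD restr_fission[OF fis] u3 by blast
    then show ?thesis using complete_below[OF cca Sa(2) _ ccD(2)[OF ccRD] uv] by blast
  qed
  have blk1: "u = u'" if G: "G \<in> fibers S''" "u \<in> G" "u' \<in> G" "snd u = snd u'" for G u u'
  proof -
    have uO: "u \<in> ?\<Omega>" "u' \<in> ?\<Omega>" using fiber_sub[OF cc'' G(1)] G(2,3) by blast+
    let ?D = "\<Omega>1 \<times> {snd u}"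
    have a: "snd u \<in> \<Omega>2" using uO by (simp add: mem_Times_iff)
    have uD: "u \<in> ?D" "u' \<in> ?D" using uO G(4) by (simp_all add: mem_Times_iff)
    have "{(u,u)} \<in> restr S'' ?D" by (rule blockc[OF a uD(1) uD(1)])
    then obtain s where s: "s \<in> S''" "{(u,u)} = s \<inter> (?D \<times> ?D)" unfolding restr_def by blast
    have IG: "Id_on G \<in> S''" using G(1) unfolding fibers_def by simp
    have "(u,u) \<in> s" using s(2) by blast
    moreover have "(u,u) \<in> Id_on G" using G(2) by (rule Id_onI)
    ultimately have "s = Id_on G" using cc_part[OF cc'' s(1) IG] by blast
    moreover have "(u',u') \<in> Id_on G" using G(3) by (rule Id_onI)
    ultimately have "(u',u') \<in> s \<inter> (?D \<times> ?D)" using uD by simp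
    then have "(u',u') \<in> {(u,u)}" using s(2) by simp
    then show ?thesis by simp
  qed
  have projsub: "snd ` G \<subseteq> snd ` H"
    if G: "G \<in> fibers S''" "H \<in> fibers S''" "u \<in> G" "v \<in> H" "snd u = snd v" for G H u v
  proof
    fix a assume "a \<in> snd ` G"
    then obtain w where w: "w \<in> G" "a = snd w" by blast
    have uO: "u \<in> ?\<Omega>" "v \<in> ?\<Omega>" using fiber_sub[OF cc''] G by blast+
    obtain r where r: "r \<in> S''" "(u,v) \<in> r" using cc_cover[OF cc''] uO by blast
    have "(u,v) \<in> ?e" using eI uO G(5) by blast
    then have re: "r \<subseteq> ?e" using rel_meet[OF cc'' e'' r(1) r(2)] by blast
    have IG: "Id_on G \<in> S''" "Id_on H \<in> S''" using G(1,2) unfolding fibers_def by simp_all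
    obtain g where g: "(w,g) \<in> r" using valency[OF cc'' r(1) r(2) IG(1) G(3) w(1)] by blast
    have "g \<in> H" using fiber_col[OF cc'' r(1) r(2) IG(2) G(4) g] .
    moreover have "snd w = snd g" using eD g re by blast
    ultimately show "a \<in> snd ` H" using w by blast
  qed
  have projeq: "snd ` G = snd ` H" if G: "G \<in> fibers S''" "H \<in> fibers S''" "a \<in> snd ` G" "a \<in> snd ` H" for G H a
  proof -
    obtain u where u: "u \<in> G" "a = snd u" using G(3) by blast
    obtain v where v: "v \<in> H" "a = snd v" using G(4) by blast
    show ?thesis using projsub[OF G(1,2) u(1) v(1)] projsub[OF G(2,1) v(1) u(1)] u v by simp
  qed
  define \<rho> where "\<rho> C = (SOME G. G \<in> fibers S'' \<and> snd ` G = C)" for C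
  have rho: "\<rho> (snd ` G) \<in> fibers S'' \<and> snd ` (\<rho> (snd ` G)) = snd ` G" if "G \<in> fibers S''" for G
    unfolding \<rho>_def by (rule someI[of _ G]) (use that in simp)
  define R where "R = (\<lambda>G. \<rho> (snd ` G)) ` fibers S''"
  have RF: "R \<subseteq> fibers S''" unfolding R_def using rho by blast
  define X where "X = \<Union>R"
  have XO: "X \<subseteq> ?\<Omega>" unfolding X_def using RF fiber_sub[OF cc''] by blast
  have injX: "inj_on snd X"
  proof (rule inj_onI)
    fix x1 x2 assume x: "x1 \<in> X" "x2 \<in> X" "snd x1 = snd x2"
    obtain G1 where G1: "G1 \<in> fibers S''" "x1 \<in> \<rho> (snd ` G1)" using x(1) unfolding X_def R_def by blast
    obtain G2 where G2: "G2 \<in> fibers S''" "x2 \<in> \<rho> (snd ` G2)" using x(2) unfolding X_def R_def by blast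
    have "snd ` (\<rho> (snd ` G1)) = snd ` (\<rho> (snd ` G2))"
      using projeq[of "\<rho> (snd ` G1)" "\<rho> (snd ` G2)" "snd x1"] rho[OF G1(1)] rho[OF G2(1)] G1(2) G2(2) x(3) by blast
    then have "snd ` G1 = snd ` G2" using rho[OF G1(1)] rho[OF G2(1)] by simp
    then have "x2 \<in> \<rho> (snd ` G1)" using G2(2) by simp
    then show "x1 = x2" using blk1[of "\<rho> (snd ` G1)" x1 x2] rho[OF G1(1)] G1(2) x(3) by blast
  qed
  have sX: "snd ` X = \<Omega>2"
  proof
    show "snd ` X \<subseteq> \<Omega>2" using XO by (auto simp: mem_Times_iff)
    show "\<Omega>2 \<subseteq> snd ` X"
    proof
      fix a assume a: "a \<in> \<Omega>2"
      obtain x1 where x1: "x1 \<in> \<Omega>1" using ne1 by blast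
      have "(x1,a) \<in> ?\<Omega>" using x1 a by simp
      then obtain G where G: "G \<in> fibers S''" "(x1,a) \<in> G" using fiber_cover[OF cc''] by blast
      have "a \<in> snd ` G" using G(2) by (metis snd_conv image_eqI)
      then have "a \<in> snd ` (\<rho> (snd ` G))" using rho[OF G(1)] by simp
      moreover have "\<rho> (snd ` G) \<subseteq> X" unfolding X_def R_def using G(1) by blast
      ultimately show "a \<in> snd ` X" by blast
    qed
  qed
  define SX where "SX = {s \<in> S''. s \<subseteq> X \<times> X}"
  have ccX: "coherent_config X SX" unfolding SX_def X_def by (rule subcc[OF cc'' RF])
  define T where "T = rel_image snd SX"
  have ccT: "coherent_config \<Omega>2 T" using transport_cc[OF ccX injX] sX unfolding T_def by simp
  have inX: "s \<subseteq> X \<times> X" if "s \<in> S''" "(u,v) \<in> s" "u \<in> X" "v \<in> X" for s u v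
    using basic_in_union[OF cc'' RF that(1,2)] that(3,4) unfolding X_def by blast
  have inT: "map_prod snd snd ` s \<in> T" if "s \<in> SX" for s
    unfolding T_def rel_image_def using that by blast
  have each: "s2 \<in> cc_rels T" if s2: "s2 \<in> S2" for s2
  proof -
    let ?L = "{(x,y). x \<in> ?\<Omega> \<and> y \<in> ?\<Omega> \<and> (snd x, snd y) \<in> s2}"
    have "?L \<in> cc_rels S" by (rule L_rel[OF wc cc2 ne1 s2])
    then have "?L \<in> cc_rels S''" using fis unfolding fission_def by blast
    then obtain U where U: "U \<subseteq> S''" "?L = \<Union>U" unfolding cc_rels_def by blast
    let ?W = "(\<lambda>u. map_prod snd snd ` u) ` {u \<in> U. u \<subseteq> X \<times> X}"
    show ?thesis
    proof (rule cc_relsI[of ?W])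
      show "?W \<subseteq> T" using inT U(1) unfolding SX_def by blast
      show "s2 = \<Union>?W"
      proof
        show "s2 \<subseteq> \<Union>?W"
        proof
          fix p assume p: "p \<in> s2"
          obtain a b where ab: "p = (a,b)" by (cases p)
          have "a \<in> \<Omega>2" "b \<in> \<Omega>2" using cc_sub[OF cc2 s2] p ab by auto
          then obtain u v where uv: "u \<in> X" "a = snd u" "v \<in> X" "b = snd v" using sX by blast
          have "(u,v) \<in> ?L" using uv XO p ab by auto
          then obtain w where w: "w \<in> U" "(u,v) \<in> w" using U(2) by blast
          have "w \<subseteq> X \<times> X" using inX[of w u v] w U(1) uv by blast
          then have "w \<in> {u \<in> U. u \<subseteq> X \<times> X}" using w(1) by simp
          moreover have "p \<in> map_prod snd snd ` w" using w(2) uv ab by force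
          ultimately show "p \<in> \<Union>?W" by blast
        qed
        show "\<Union>?W \<subseteq> s2"
        proof
          fix p assume "p \<in> \<Union>?W"
          then obtain w where w: "w \<in> U" "p \<in> map_prod snd snd ` w" by blast
          obtain q where q: "p = map_prod snd snd q" "q \<in> w" using w(2) by (rule imageE)
          have "q \<in> \<Union>U" using q(2) w(1) by blast
          then have "q \<in> ?L" by (subst U(2))
          then show "p \<in> s2" using q(1) by (cases q) auto
        qed
      qed
    qed
  qed
  have fisT: "fission S2 T" unfolding fission_def
  proof
    fix Z assume "Z \<in> cc_rels S2"
    then obtain U2 where U2: "U2 \<subseteq> S2" "Z = \<Union>U2" unfolding cc_rels_def by blast
    then show "Z \<in> cc_rels T" using cc_rels_Union[of U2 T] each by blast
  qed
  have fibT: "Id_on (snd ` G) \<in> T" if G: "G \<in> fibers S''" for G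
  proof -
    let ?H = "\<rho> (snd ` G)"
    have H: "?H \<in> fibers S''" "snd ` ?H = snd ` G" using rho[OF G] by simp_all
    have "?H \<subseteq> X" unfolding X_def R_def using G by blast
    then have "Id_on ?H \<in> SX" using H(1) unfolding SX_def fibers_def by auto
    then have "map_prod snd snd ` Id_on ?H \<in> T" by (rule inT)
    then show ?thesis using H(2) by (simp add: Id_on_img)
  qed
  have uofT: "\<forall>\<Delta>\<in>(\<lambda>\<Gamma>. snd ` \<Gamma>) ` \<Pi>. union_of_fibers T \<Delta>"
  proof
    fix \<Delta> assume "\<Delta> \<in> (\<lambda>\<Gamma>. snd ` \<Gamma>) ` \<Pi>"
    then obtain D where D': "\<Delta> = snd ` D" "D \<in> \<Pi>" by (rule imageE)
    have "union_of_fibers S'' D" using uof D'(2) by (rule bspec)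
    then obtain FD where FD0: "FD \<subseteq> fibers S'' \<and> D = \<Union>FD" unfolding union_of_fibers_def by (rule exE)
    then have FD: "FD \<subseteq> fibers S''" "D = \<Union>FD" by (rule conjunct1, rule conjunct2)
    have "(\<lambda>G. snd ` G) ` FD \<subseteq> fibers T" using fibT FD(1) unfolding fibers_def by blast
    moreover have "\<Delta> = \<Union>((\<lambda>G. snd ` G) ` FD)" unfolding D'(1) FD(2) by (rule image_Union)
    ultimately show "union_of_fibers T \<Delta>" unfolding union_of_fibers_def by blast
  qed
  obtain S2' where S2': "is_Pi_fission \<Omega>2 S2 ((\<lambda>\<Gamma>. snd ` \<Gamma>) ` \<Pi>) S2'" "complete_cc S2'"
    using h6 unfolding gen_base_def by blast
  have cc2': "coherent_config \<Omega>2 S2'" using S2'(1) unfolding is_Pi_fission_def by (elim conjE)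
  have mn2: "\<forall>S3. coherent_config \<Omega>2 S3 \<and> fission S2 S3 \<and> (\<forall>\<Delta>\<in>(\<lambda>\<Gamma>. snd ` \<Gamma>) ` \<Pi>. union_of_fibers S3 \<Delta>)
          \<longrightarrow> fission S2' S3" using S2'(1) unfolding is_Pi_fission_def by (elim conjE)
  have "fission S2' T" using mn2 ccT fisT uofT by blast
  then have Tsing: "{(a,a)} \<in> T" if "a \<in> \<Omega>2" for a
    using complete_below[OF cc2' S2'(2) _ ccD(2)[OF ccT] that that] by blast
  have fibsing: "u' = u" if G: "G \<in> fibers S''" "u \<in> G" "u' \<in> G" for G u u'
  proof -
    have uO: "u \<in> ?\<Omega>" "u' \<in> ?\<Omega>" using fiber_sub[OF cc'' G(1)] G(2,3) by blast+
    have a: "snd u \<in> \<Omega>2" using uO by (simp add: mem_Times_iff)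
    have i1: "(snd u, snd u) \<in> Id_on (snd ` G)" using G(2) by (intro Id_onI imageI)
    have i2: "(snd u', snd u') \<in> Id_on (snd ` G)" using G(3) by (intro Id_onI imageI)
    have "Id_on (snd ` G) = {(snd u, snd u)}" using cc_part[OF ccT fibT[OF G(1)] Tsing[OF a] i1] by simp
    then have "snd u' = snd u" using i2 by simp
    then show ?thesis using blk1[OF G(1) G(3) G(2)] by simp
  qed
  obtain r where r: "r \<in> S''" "(x,y) \<in> r" using cc_cover[OF cc''] xy by blast
  obtain Gx where Gx: "Gx \<in> fibers S''" "x \<in> Gx" using fiber_cover[OF cc'' xy(1)] by blast
  obtain Gy where Gy: "Gy \<in> fibers S''" "y \<in> Gy" using fiber_cover[OF cc'' xy(2)] by blast
  have IG: "Id_on Gx \<in> S''" "Id_on Gy \<in> S''" using Gx Gy unfolding fibers_def by simp_all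
  have "r \<subseteq> {(x,y)}"
  proof
    fix p assume p: "p \<in> r"
    obtain p1 p2 where pp: "p = (p1,p2)" by (cases p)
    have "p1 \<in> Gx" using fiber_row[OF cc'' r IG(1) Gx(2)] p pp by blast
    then have 1: "p1 = x" using fibsing[OF Gx(1) Gx(2)] by blast
    have "p2 \<in> Gy" using fiber_col[OF cc'' r IG(2) Gy(2)] p pp by blast
    then have 2: "p2 = y" using fibsing[OF Gy(1) Gy(2)] by blast
    show "p \<in> {(x,y)}" using pp 1 2 by simp
  qed
  then have "r = {(x,y)}" using r(2) by blast
  then show ?thesis using r(1) by simp
qed



theorem lemma5p1:
  fixes \<Omega>1 :: "'a set" and S1 :: "('a \<times> 'a) set set"
    and \<Omega>2 :: "'b set" and S2 :: "('b \<times> 'b) set set"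
    and S :: "(('a \<times> 'b) \<times> ('a \<times> 'b)) set set"
    and \<Pi> :: "('a \<times> 'b) set set"
  assumes "coherent_config \<Omega>1 S1"
    and "coherent_config \<Omega>2 S2"
    and "is_wreath \<Omega>1 S1 \<Omega>2 S2 S"
    and "\<Pi> \<subseteq> Pow (\<Omega>1 \<times> \<Omega>2)"
    and "\<forall>a\<in>\<Omega>2. gen_base (\<Omega>1 \<times> {a}) (restr S (\<Omega>1 \<times> {a})) ((\<lambda>\<Gamma>. \<Gamma> \<inter> (\<Omega>1 \<times> {a})) ` \<Pi>)"
    and "gen_base \<Omega>2 S2 ((\<lambda>\<Gamma>. snd ` \<Gamma>) ` \<Pi>)"
  shows "gen_base (\<Omega>1 \<times> \<Omega>2) S \<Pi>"
proof -
  let ?\<Omega> = "\<Omega>1 \<times> \<Omega>2"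
  have wc: "wr_cond \<Omega>1 S1 \<Omega>2 S2 S" using assms(3) unfolding is_wreath_def by (elim conjE)
  have cc: "coherent_config ?\<Omega> S" using wc unfolding wr_cond_def by (elim conjE)
  have fin: "finite ?\<Omega>" by (rule cc_fin[OF cc])
  define S' where "S' = (\<lambda>p. {p}) ` (?\<Omega> \<times> ?\<Omega>)"
  have memI: "{p} \<in> S'" if "p \<in> ?\<Omega> \<times> ?\<Omega>" for p unfolding S'_def using that by (rule imageI)
  have memE: "\<exists>p. p \<in> ?\<Omega> \<times> ?\<Omega> \<and> s = {p}" if hs: "s \<in> S'" for s
  proof -
    obtain p where "s = {p}" "p \<in> ?\<Omega> \<times> ?\<Omega>" using hs unfolding S'_def by (rule imageE)
    then show ?thesis by blast
  qed
  have ccS': "coherent_config ?\<Omega> S'"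
  proof (rule ccI[OF fin])
    show "\<forall>s\<in>S'. s \<noteq> {}" using memE by fastforce
    show "\<Union>S' = ?\<Omega> \<times> ?\<Omega>" unfolding S'_def by simp
    show "\<forall>s\<in>S'. \<forall>t\<in>S'. s \<noteq> t \<longrightarrow> s \<inter> t = {}"
    proof (intro ballI impI)
      fix s t assume st: "s \<in> S'" "t \<in> S'" "s \<noteq> t"
      obtain p where p: "s = {p}" using memE[OF st(1)] by blast
      obtain q where q: "t = {q}" using memE[OF st(2)] by blast
      show "s \<inter> t = {}" using st(3) p q by auto
    qed
    show "\<exists>T\<subseteq>S'. \<Union>T = Id_on ?\<Omega>"
    proof (intro exI conjI)
      show "(\<lambda>x. {(x,x)}) ` ?\<Omega> \<subseteq> S'"
      proof
        fix s assume "s \<in> (\<lambda>x. {(x,x)}) ` ?\<Omega>"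
        then obtain x where x: "s = {(x,x)}" "x \<in> ?\<Omega>" by (rule imageE)
        then show "s \<in> S'" using memI[of "(x,x)"] by simp
      qed
      show "\<Union>((\<lambda>x. {(x,x)}) ` ?\<Omega>) = Id_on ?\<Omega>" unfolding Id_on_def by (rule refl)
    qed
    show "\<forall>s\<in>S'. converse s \<in> S'"
    proof
      fix s assume "s \<in> S'"
      then obtain p where p: "p \<in> ?\<Omega> \<times> ?\<Omega>" "s = {p}" using memE by blast
      obtain a b where ab: "p = (a,b)" by (cases p)
      then have "converse s = {(b,a)}" using p by auto
      moreover have "(b,a) \<in> ?\<Omega> \<times> ?\<Omega>" using ab p by simp
      ultimately show "converse s \<in> S'" using memI by simp
    qed
    show "\<forall>r\<in>S'. \<forall>s\<in>S'. \<forall>t\<in>S'. \<forall>p\<in>t. \<forall>q\<in>t.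
      card {\<gamma>. (fst p, \<gamma>) \<in> r \<and> (\<gamma>, snd p) \<in> s} = card {\<gamma>. (fst q, \<gamma>) \<in> r \<and> (\<gamma>, snd q) \<in> s}"
    proof (intro ballI)
      fix r s t p q assume "t \<in> S'" "p \<in> t" "q \<in> t"
      then have "p = q" using memE by blast
      then show "card {\<gamma>. (fst p, \<gamma>) \<in> r \<and> (\<gamma>, snd p) \<in> s} = card {\<gamma>. (fst q, \<gamma>) \<in> r \<and> (\<gamma>, snd q) \<in> s}"
        by simp
    qed
  qed
  have cpl: "complete_cc S'" unfolding complete_cc_def using memE by blast
  have fis: "fission S S'" unfolding fission_def
  proof
    fix Z assume "Z \<in> cc_rels S"
    then obtain U where U: "U \<subseteq> S" "Z = \<Union>U" unfolding cc_rels_def by blast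
    have "Z \<subseteq> ?\<Omega> \<times> ?\<Omega>" using U cc_sub[OF cc] by blast
    show "Z \<in> cc_rels S'"
    proof (rule cc_relsI[of "(\<lambda>p. {p}) ` Z"])
      show "(\<lambda>p. {p}) ` Z \<subseteq> S'" unfolding S'_def using \<open>Z \<subseteq> ?\<Omega> \<times> ?\<Omega>\<close> by (rule image_mono)
      show "Z = \<Union>((\<lambda>p. {p}) ` Z)" by simp
    qed
  qed
  have uofS': "\<forall>D\<in>\<Pi>. union_of_fibers S' D"
  proof
    fix D assume D: "D \<in> \<Pi>"
    then have DO: "D \<subseteq> ?\<Omega>" using assms(4) by blast
    show "union_of_fibers S' D" unfolding union_of_fibers_def
    proof (intro exI conjI)
      show "(\<lambda>x. {x}) ` D \<subseteq> fibers S'"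
      proof
        fix G assume "G \<in> (\<lambda>x. {x}) ` D"
        then obtain x where x: "G = {x}" "x \<in> D" by (rule imageE)
        then have "Id_on G = {(x,x)}" by (auto simp: Id_on_def)
        moreover have "(x,x) \<in> ?\<Omega> \<times> ?\<Omega>" using x DO by blast
        ultimately show "G \<in> fibers S'" unfolding fibers_def using memI by simp
      qed
      show "D = \<Union>((\<lambda>x. {x}) ` D)" by simp
    qed
  qed
  have minS': "fission S' S''"
    if h: "coherent_config ?\<Omega> S''" "fission S S''" "\<forall>D\<in>\<Pi>. union_of_fibers S'' D" for S''
  proof -
    have "S' \<subseteq> S''"
    proof
      fix s assume "s \<in> S'"
      then obtain p where p: "p \<in> ?\<Omega> \<times> ?\<Omega>" "s = {p}" using memE by blast
      obtain x y where xy0: "p = (x,y)" by (cases p)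
      then have xy: "x \<in> ?\<Omega>" "y \<in> ?\<Omega>" "s = {(x,y)}" using p by simp_all
      have "{(x,y)} \<in> S''" by (rule key[OF wc assms(2) assms(5) assms(6) h xy(1,2)])
      then show "s \<in> S''" using xy(3) by simp
    qed
    then show ?thesis unfolding fission_def cc_rels_def by blast
  qed
  have "is_Pi_fission ?\<Omega> S \<Pi> S'"
    unfolding is_Pi_fission_def using ccS' fis uofS' minS' by blast
  then show ?thesis unfolding gen_base_def using cpl by blast
qed


end
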